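(* Let $G$ be a connected outerplanar graph given with an outerplanar (all vertices on the outer face) planar embedding, and let a new edge $(p,q)$ between two existing vertices arrive in the ordered streaming model, i.e., together with its position in the clockwise order of edges around $p$ and around $q$, such that the resulting graph is outerplanar. If at least one of $p,q$ has degree greater than $1$ in $G$, then this information about the relative order of incident edges determines the embedding of the new edge uniquely: there is only one way to draw $(p,q)$ consistent with the given edge orders so that the resulting drawing is planar with all vertices on the outer face.
   Context: A graph is outerplanar if it has a planar drawing in which every vertex lies on the outer face. In the ordered streaming model, each new edge comes with its position in the clockwise cyclic order of edges incident to each of its endpoints. *)

theory Defs
  imports Main
begin

definition simple_graph :: "'v set \<Rightarrow> 'v set set \<Rightarrow> bool" where
  "simple_graph V E \<longleftrightarrow> finite V \<and>
     (\<forall>e\<in>E. \<exists>u v. e = {u, v} \<and> u \<noteq> v \<and> u \<in> V \<and> v \<in> V)"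

definition nbrs :: "'v set set \<Rightarrow> 'v \<Rightarrow> 'v set" where
  "nbrs E u = {v. {u, v} \<in> E}"

definition degree :: "'v set set \<Rightarrow> 'v \<Rightarrow> nat" where
  "degree E u = card (nbrs E u)"

definition connected_graph :: "'v set \<Rightarrow> 'v set set \<Rightarrow> bool" where
  "connected_graph V E \<longleftrightarrow>
     (\<forall>u\<in>V. \<forall>v\<in>V. (u, v) \<in> {(x, y). {x, y} \<in> E}\<^sup>*)"

definition darts :: "'v set set \<Rightarrow> ('v \<times> 'v) set" where
  "darts E = {(u, v). {u, v} \<in> E}"

text \<open>Combinatorial embedding (rotation system): \<open>\<rho> u v\<close> is the neighbour of \<open>u\<close>
  following \<open>v\<close> in the clockwise cyclic order of edges around \<open>u\<close>; \<open>\<rho> u\<close> is a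
  cyclic permutation (a single cycle) of the neighbourhood of \<open>u\<close>.\<close>
definition rotation_system :: "'v set \<Rightarrow> 'v set set \<Rightarrow> ('v \<Rightarrow> 'v \<Rightarrow> 'v) \<Rightarrow> bool" where
  "rotation_system V E \<rho> \<longleftrightarrow>
     (\<forall>u\<in>V. bij_betw (\<rho> u) (nbrs E u) (nbrs E u) \<and>
        (\<forall>v\<in>nbrs E u. \<forall>w\<in>nbrs E u. \<exists>k. (\<rho> u ^^ k) v = w))"

definition face_succ :: "('v \<Rightarrow> 'v \<Rightarrow> 'v) \<Rightarrow> 'v \<times> 'v \<Rightarrow> 'v \<times> 'v" where
  "face_succ \<rho> d = (snd d, \<rho> (snd d) (fst d))"

definition faces :: "'v set set \<Rightarrow> ('v \<Rightarrow> 'v \<Rightarrow> 'v) \<Rightarrow> ('v \<times> 'v) set set" where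
  "faces E \<rho> = {{(face_succ \<rho> ^^ k) d | k. True} | d. d \<in> darts E}"

text \<open>A plane embedding of a connected graph: a rotation system of genus 0
  (Euler's formula V - E + F = 2) together with a choice of outer face.\<close>
definition plane_embedding ::
  "'v set \<Rightarrow> 'v set set \<Rightarrow> ('v \<Rightarrow> 'v \<Rightarrow> 'v) \<Rightarrow> ('v \<times> 'v) set \<Rightarrow> bool" where
  "plane_embedding V E \<rho> OF \<longleftrightarrow> rotation_system V E \<rho> \<and>
     int (card V) - int (card E) + int (card (faces E \<rho>)) = 2 \<and> OF \<in> faces E \<rho>"

definition outerplanar_embedding ::
  "'v set \<Rightarrow> 'v set set \<Rightarrow> ('v \<Rightarrow> 'v \<Rightarrow> 'v) \<Rightarrow> ('v \<times> 'v) set \<Rightarrow> bool" where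
  "outerplanar_embedding V E \<rho> OF \<longleftrightarrow> plane_embedding V E \<rho> OF \<and> fst ` OF = V"

definition outerplanar :: "'v set \<Rightarrow> 'v set set \<Rightarrow> bool" where
  "outerplanar V E \<longleftrightarrow> (\<exists>\<rho> OF. outerplanar_embedding V E \<rho> OF)"

text \<open>Ordered-streaming consistency: the embedding \<open>(\<rho>', O')\<close> of \<open>G + pq\<close> is outerplanar,
  the new edge \<open>pq\<close> is placed immediately after edge \<open>pa\<close> clockwise around \<open>p\<close> and
  immediately after edge \<open>qb\<close> clockwise around \<open>q\<close>, and deleting \<open>pq\<close> from the rotation
  system \<open>\<rho>'\<close> gives back the given rotation system \<open>\<rho>\<close> of \<open>G\<close>.\<close>
definition consistent_extension ::
  "'v set \<Rightarrow> 'v set set \<Rightarrow> ('v \<Rightarrow> 'v \<Rightarrow> 'v) \<Rightarrow> 'v \<Rightarrow> 'v \<Rightarrow> 'v \<Rightarrow> 'v \<Rightarrow>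
   ('v \<Rightarrow> 'v \<Rightarrow> 'v) \<Rightarrow> ('v \<times> 'v) set \<Rightarrow> bool" where
  "consistent_extension V E \<rho> p q a b \<rho>' O' \<longleftrightarrow>
     outerplanar_embedding V (insert {p, q} E) \<rho>' O' \<and>
     \<rho>' p a = q \<and> \<rho>' q b = p \<and>
     (\<forall>u\<in>V. \<forall>v\<in>nbrs E u.
        \<rho> u v = (if (u = p \<and> \<rho>' u v = q) \<or> (u = q \<and> \<rho>' u v = p)
                 then \<rho>' u (\<rho>' u v) else \<rho>' u v))"

end

theory Submission imports Defs begin

lemma sg_edge: "simple_graph V E \<Longrightarrow> e \<in> E \<Longrightarrow> \<exists>u v. e = {u,v} \<and> u \<noteq> v \<and> u \<in> V \<and> v \<in> V"
  unfolding simple_graph_def by (elim conjE) (erule bspec)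

lemma rs_at:
  assumes "rotation_system V E \<rho>" "v \<in> V"
  shows "bij_betw (\<rho> v) (nbrs E v) (nbrs E v) \<and>
        (\<forall>x\<in>nbrs E v. \<forall>w\<in>nbrs E v. \<exists>k. (\<rho> v ^^ k) x = w)"
proof -
  have "\<forall>u\<in>V. bij_betw (\<rho> u) (nbrs E u) (nbrs E u) \<and>
        (\<forall>x\<in>nbrs E u. \<forall>w\<in>nbrs E u. \<exists>k. (\<rho> u ^^ k) x = w)"
    using assms(1) by (simp only: rotation_system_def)
  then show ?thesis using assms(2) by (rule bspec)
qed

lemma rs_bij: "rotation_system V E \<rho> \<Longrightarrow> v \<in> V \<Longrightarrow> bij_betw (\<rho> v) (nbrs E v) (nbrs E v)"
  using rs_at by (rule conjunct1)

lemma rs_cyc: "rotation_system V E \<rho> \<Longrightarrow> v \<in> V \<Longrightarrow> x \<in> nbrs E v \<Longrightarrow> w \<in> nbrs E v \<Longrightarrow> \<exists>k. (\<rho> v ^^ k) x = w"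
proof -
  assume a: "rotation_system V E \<rho>" "v \<in> V" "x \<in> nbrs E v" "w \<in> nbrs E v"
  have "\<forall>x\<in>nbrs E v. \<forall>w\<in>nbrs E v. \<exists>k. (\<rho> v ^^ k) x = w" using rs_at[OF a(1,2)] by (rule conjunct2)
  then show ?thesis using a(3,4) by simp
qed

lemma darts_sub:
  assumes "simple_graph V E" shows "darts E \<subseteq> V \<times> V"
  using assms unfolding simple_graph_def darts_def
  by (auto simp: doubleton_eq_iff)

lemma darts_finite:
  assumes "simple_graph V E" shows "finite (darts E)"
  using darts_sub[OF assms] assms unfolding simple_graph_def
  by (meson finite_SigmaI rev_finite_subset)

lemma succ_in:
  assumes sg: "simple_graph V E" and rs: "rotation_system V E \<rho>" and d: "d \<in> darts E"
  shows "face_succ \<rho> d \<in> darts E"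
proof -
  obtain u v where uv: "d = (u,v)" by (cases d)
  have "v \<in> V" using darts_sub[OF sg] d uv by auto
  moreover have "u \<in> nbrs E v" using d uv by (auto simp: darts_def nbrs_def insert_commute)
  ultimately have "\<rho> v u \<in> nbrs E v" using rs unfolding rotation_system_def bij_betw_def by auto
  then show ?thesis using uv by (auto simp: face_succ_def darts_def nbrs_def)
qed

lemma succ_inj:
  assumes sg: "simple_graph V E" and rs: "rotation_system V E \<rho>"
  shows "inj_on (face_succ \<rho>) (darts E)"
proof (rule inj_onI)
  fix d d' assume d: "d \<in> darts E" and d': "d' \<in> darts E" and eq: "face_succ \<rho> d = face_succ \<rho> d'"
  obtain u v where uv: "d = (u,v)" by (cases d)
  obtain u' v' where uv': "d' = (u',v')" by (cases d')
  have vv: "v = v'" using eq uv uv' by (simp add: face_succ_def)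
  have "v \<in> V" using darts_sub[OF sg] d uv by auto
  moreover have "u \<in> nbrs E v" using d uv by (auto simp: darts_def nbrs_def insert_commute)
  moreover have "u' \<in> nbrs E v" using d' uv' vv by (auto simp: darts_def nbrs_def insert_commute)
  moreover have "\<rho> v u = \<rho> v u'" using eq uv uv' vv by (simp add: face_succ_def)
  ultimately have "u = u'" using rs unfolding rotation_system_def bij_betw_def inj_on_def by blast
  then show "d = d'" using uv uv' vv by simp
qed

lemma funpow_in:
  assumes "\<And>x. x \<in> D \<Longrightarrow> s x \<in> D" "d \<in> D" shows "(s ^^ k) d \<in> D"
  using assms by (induction k) auto

lemma funpow_inj:
  assumes "\<And>x. x \<in> D \<Longrightarrow> s x \<in> D" "inj_on s D"
  shows "x \<in> D \<Longrightarrow> y \<in> D \<Longrightarrow> (s ^^ i) x = (s ^^ i) y \<Longrightarrow> x = y"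
proof (induction i arbitrary: x y)
  case 0 then show ?case by simp
next
  case (Suc i)
  have "(s ^^ i) (s x) = (s ^^ i) (s y)" using Suc.prems by (simp only: funpow_Suc_right o_apply)
  moreover have "s x \<in> D" "s y \<in> D" using Suc.prems assms(1) by auto
  ultimately have "s x = s y" using Suc.IH by simp
  then show ?case using inj_onD[OF assms(2)] Suc.prems(1,2) by simp
qed

lemma period:
  assumes cl: "\<And>x. x \<in> D \<Longrightarrow> s x \<in> D" and inj: "inj_on s D" and fin: "finite D" and d: "d \<in> D"
  shows "\<exists>P>0. (s ^^ P) d = d"
proof -
  have key: "\<exists>P>0. (s ^^ P) d = d" if ij0: "i < j" "(s ^^ i) d = (s ^^ j) d" for i j
  proof -
    have jj: "i + (j - i) = j" using ij0(1) by simp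
    have "(s ^^ (i + (j - i))) d = (s ^^ i) ((s ^^ (j - i)) d)"
      by (simp only: funpow_add o_apply)
    then have "(s ^^ j) d = (s ^^ i) ((s ^^ (j - i)) d)" by (simp only: jj)
    with ij0(2) have "(s ^^ i) d = (s ^^ i) ((s ^^ (j - i)) d)" by (rule trans)
    from funpow_inj[of D s d "(s ^^ (j - i)) d" i, OF cl inj d funpow_in[of D s d "j - i", OF cl d] this]
    have per: "d = (s ^^ (j - i)) d" .
    have pos: "j - i > 0" using ij0(1) by simp
    show "\<exists>P>0. (s ^^ P) d = d" by (rule exI[of _ "j - i"], rule conjI[OF pos per[symmetric]])
  qed
  show ?thesis
  proof (rule ccontr)
    assume np: "\<not> (\<exists>P>0. (s ^^ P) d = d)"
    have injk: "inj_on (\<lambda>k. (s ^^ k) d) {0..card D}"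
    proof (rule inj_onI)
      fix i j assume e: "(s ^^ i) d = (s ^^ j) d"
      show "i = j"
      proof (rule ccontr)
        assume "i \<noteq> j"
        then consider "i < j" | "j < i" by linarith
        then show False
        proof cases
          case 1 then show False using key[of i j] e np by blast
        next
          case 2 then show False using key[of j i] e np by simp
        qed
      qed
    qed
    have c: "card {0..card D} = Suc (card D)" by simp
    from card_image[OF injk] have cimg: "card ((\<lambda>k. (s ^^ k) d) ` {0..card D}) = Suc (card D)"
      by (simp only: c)
    have sub: "(\<lambda>k. (s ^^ k) d) ` {0..card D} \<subseteq> D" using funpow_in[of D s, OF cl d] by auto
    have "card ((\<lambda>k. (s ^^ k) d) ` {0..card D}) \<le> card D" by (rule card_mono[OF fin sub])
    then show False using cimg by linarith
  qed
qed

lemma period_mult: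
  assumes "(s ^^ P) d = d" shows "(s ^^ (P * n)) d = d"
proof (induction n)
  case 0 then show ?case by simp
next
  case (Suc n)
  have "(s ^^ (P * Suc n)) d = (s ^^ P) ((s ^^ (P * n)) d)" by (simp add: funpow_add)
  then show ?case using Suc assms by simp
qed

definition orb :: "('a \<Rightarrow> 'a) \<Rightarrow> 'a \<Rightarrow> 'a set" where
  "orb s d = {(s ^^ k) d | k. True}"

lemma orb_same:
  assumes cl: "\<And>x. x \<in> D \<Longrightarrow> s x \<in> D" and inj: "inj_on s D" and fin: "finite D" and d: "d \<in> D"
    and d': "d' \<in> orb s d"
  shows "orb s d' = orb s d"
proof -
  obtain k0 where k0: "d' = (s ^^ k0) d" using d' by (auto simp: orb_def)
  obtain P where P: "P > 0" "(s ^^ P) d = d" using period[OF cl inj fin d] by blast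
  show ?thesis
  proof
    show "orb s d' \<subseteq> orb s d"
    proof
      fix x assume "x \<in> orb s d'"
      then obtain k where k: "x = (s ^^ k) d'" by (auto simp: orb_def)
      have "x = (s ^^ (k + k0)) d" unfolding k k0 by (simp only: funpow_add o_apply)
      then show "x \<in> orb s d" by (auto simp: orb_def)
    qed
  next
    show "orb s d \<subseteq> orb s d'"
    proof
      fix x assume "x \<in> orb s d"
      then obtain k where k: "x = (s ^^ k) d" by (auto simp: orb_def)
      have kk: "k0 \<le> P * k0" using P by (cases P) auto
      have pk: "k + (P * k0 - k0) + k0 = k + P * k0" using kk by linarith
      have "x = (s ^^ k) ((s ^^ (P * k0)) d)" using k period_mult[OF P(2)] by simp
      also have "\<dots> = (s ^^ (k + P * k0)) d" by (simp only: funpow_add o_apply)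
      also have "\<dots> = (s ^^ (k + (P * k0 - k0) + k0)) d" by (simp only: pk)
      also have "\<dots> = (s ^^ (k + (P * k0 - k0))) ((s ^^ k0) d)" by (simp only: funpow_add o_apply)
      finally show "x \<in> orb s d'" using k0 by (auto simp: orb_def)
    qed
  qed
qed


lemma faces_orb: "faces E \<rho> = orb (face_succ \<rho>) ` darts E"
  unfolding faces_def orb_def by auto

lemma pairs_eq:
  fixes u v :: 'b
  shows "{(x,y). {x,y} = {u,v}} = {(u,v),(v,u)}"
proof (rule set_eqI)
  fix z :: "'b \<times> 'b"
  obtain x y where z: "z = (x,y)" by (cases z)
  show "z \<in> {(x,y). {x,y} = {u,v}} \<longleftrightarrow> z \<in> {(u,v),(v,u)}"
    unfolding z by (simp add: doubleton_eq_iff)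
qed

context
  fixes V E \<rho>
  assumes sg: "simple_graph V E" and rs: "rotation_system V E \<rho>"
begin

lemma cl: "x \<in> darts E \<Longrightarrow> face_succ \<rho> x \<in> darts E" using succ_in[OF sg rs] .

lemma face_sub: "f \<in> faces E \<rho> \<Longrightarrow> f \<subseteq> darts E"
  unfolding faces_orb orb_def using funpow_in[OF cl] by auto

lemma faces_fin: "finite (faces E \<rho>)"
  unfolding faces_orb using darts_finite[OF sg] by simp

lemma face_fin: "f \<in> faces E \<rho> \<Longrightarrow> finite f"
  using face_sub darts_finite[OF sg] finite_subset by blast

lemma faces_disj:
  assumes "f1 \<in> faces E \<rho>" "f2 \<in> faces E \<rho>" "f1 \<noteq> f2" shows "f1 \<inter> f2 = {}"
proof (rule ccontr)
  assume "f1 \<inter> f2 \<noteq> {}"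
  then obtain x where x: "x \<in> f1" "x \<in> f2" by blast
  obtain d1 where d1: "d1 \<in> darts E" "f1 = orb (face_succ \<rho>) d1" using assms(1) unfolding faces_orb by blast
  obtain d2 where d2: "d2 \<in> darts E" "f2 = orb (face_succ \<rho>) d2" using assms(2) unfolding faces_orb by blast
  have "orb (face_succ \<rho>) x = f1" using orb_same[OF cl succ_inj[OF sg rs] darts_finite[OF sg] d1(1)] d1 x by auto
  moreover have "orb (face_succ \<rho>) x = f2" using orb_same[OF cl succ_inj[OF sg rs] darts_finite[OF sg] d2(1)] d2 x by auto
  ultimately show False using assms(3) by simp
qed

lemma faces_union: "\<Union>(faces E \<rho>) = darts E"
proof
  show "\<Union>(faces E \<rho>) \<subseteq> darts E" using face_sub by blast
  show "darts E \<subseteq> \<Union>(faces E \<rho>)"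
  proof
    fix d assume "d \<in> darts E"
    moreover have "d \<in> orb (face_succ \<rho>) d" unfolding orb_def by (auto intro: exI[of _ 0])
    ultimately show "d \<in> \<Union>(faces E \<rho>)" unfolding faces_orb by blast
  qed
qed

lemma sum_faces: "sum card (faces E \<rho>) = card (darts E)"
proof -
  have "card (\<Union>(faces E \<rho>)) = sum card (faces E \<rho>)"
    by (rule card_Union_disjoint) (auto simp: pairwise_def disjnt_def faces_disj face_fin)
  then show ?thesis using faces_union by simp
qed

lemma finE: "finite E"
proof -
  have "E \<subseteq> Pow V" using sg unfolding simple_graph_def by auto
  then show ?thesis using sg unfolding simple_graph_def by (meson finite_Pow_iff rev_finite_subset)
qed

lemma card_darts: "card (darts E) = 2 * card E"
proof -
  let ?A = "\<lambda>e. {(x,y). {x,y} = e}"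
  have D: "darts E = \<Union>(?A ` E)"
  proof (rule set_eqI)
    fix z :: "'a \<times> 'a"
    obtain x y where z: "z = (x,y)" by (cases z)
    show "z \<in> darts E \<longleftrightarrow> z \<in> \<Union>(?A ` E)" unfolding z darts_def by simp
  qed
  have two: "card (?A e) = 2" if eE: "e \<in> E" for e
  proof -
    obtain u v where uv: "e = {u,v}" "u \<noteq> v" using sg_edge[OF sg eE] by (elim exE conjE)
    have "card {(u,v),(v,u)} = 2" using uv(2) by simp
    then show ?thesis unfolding uv(1) pairs_eq .
  qed
  have fin: "finite (?A e)" if "e \<in> E" for e
    using two[OF that] by (intro card_ge_0_finite) simp
  have "card (\<Union>(?A ` E)) = (\<Sum>e\<in>E. card (?A e))"
  proof (rule card_UN_disjoint)
    show "finite E" by (rule finE)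
    show "\<forall>i\<in>E. finite (?A i)" using fin by blast
    show "\<forall>i\<in>E. \<forall>j\<in>E. i \<noteq> j \<longrightarrow> ?A i \<inter> ?A j = {}" by blast
  qed
  also have "\<dots> = (\<Sum>e\<in>E. 2)" by (rule sum.cong[OF refl two])
  also have "\<dots> = 2 * card E" by simp
  finally show ?thesis unfolding D .
qed

lemma nbrs_single:
  assumes "v \<in> V" "u \<in> nbrs E v" "\<rho> v u = u" shows "nbrs E v = {u}"
proof -
  have fix_: "(\<rho> v ^^ k) u = u" for k using assms(3) by (induction k) auto
  have all: "w = u" if wn: "w \<in> nbrs E v" for w
  proof -
    obtain k where "(\<rho> v ^^ k) u = w" using rs_cyc[OF rs assms(1,2) wn] by blast
    then show "w = u" using fix_ by simp
  qed
  show ?thesis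
  proof (intro equalityI subsetI)
    fix w assume "w \<in> nbrs E v" then show "w \<in> {u}" using all by simp
  next
    fix w assume "w \<in> {u}" then show "w \<in> nbrs E v" using assms(2) by simp
  qed
qed

lemma face_big:
  assumes conn: "connected_graph V E" and x: "x \<in> V" "card (nbrs E x) \<ge> 2"
    and f: "f \<in> faces E \<rho>"
  shows "card f \<ge> 3"
proof (rule ccontr)
  assume small: "\<not> card f \<ge> 3"
  let ?s = "face_succ \<rho>"
  obtain d where d: "d \<in> darts E" "f = orb ?s d" using f unfolding faces_orb by blast
  have sub: "{d, ?s d, ?s (?s d)} \<subseteq> f" unfolding d(2) orb_def
    by (auto intro: exI[of _ 0] exI[of _ 1] exI[of _ 2] simp: numeral_2_eq_2)
  obtain u v where uv: "d = (u,v)" by (cases d)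
  have uvE: "{u,v} \<in> E" using d uv by (simp add: darts_def)
  have uV: "u \<in> V" "v \<in> V" using darts_sub[OF sg] d uv by auto
  obtain x1 y1 where xy1: "{u,v} = {x1,y1}" "x1 \<noteq> y1" using sg_edge[OF sg uvE] by (elim exE conjE)
  have neq: "u \<noteq> v" using xy1 by (auto simp: doubleton_eq_iff)
  have "d \<noteq> ?s d" using neq uv by (simp add: face_succ_def)
  moreover have "?s d \<noteq> ?s (?s d)"
    using \<open>d \<noteq> ?s d\<close> succ_inj[OF sg rs] d(1) cl[OF d(1)] by (metis inj_onD)
  moreover have "card {d, ?s d, ?s (?s d)} \<le> 2" using card_mono[OF face_fin[OF f] sub] small by simp
  ultimately have eq: "d = ?s (?s d)" by (auto simp: card_insert_if split: if_splits)
  then have r1: "\<rho> v u = u" and r2: "\<rho> u v = v" using uv by (auto simp: face_succ_def)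
  have n1: "nbrs E v = {u}" using nbrs_single[OF uV(2) _ r1] uvE by (simp add: nbrs_def insert_commute)
  have n2: "nbrs E u = {v}" using nbrs_single[OF uV(1) _ r2] uvE by (simp add: nbrs_def)
  have "(u, x) \<in> {(x, y). {x, y} \<in> E}\<^sup>*" using conn uV x unfolding connected_graph_def by blast
  then have "x \<in> {u,v}"
  proof (induction rule: rtrancl_induct)
    case base then show ?case by simp
  next
    case (step y z)
    then have "z \<in> nbrs E y" by (simp add: nbrs_def)
    then show ?case using step n1 n2 by auto
  qed
  then show False using x n1 n2 by auto
qed

lemma main_count:
  assumes conn: "connected_graph V E" and x: "x \<in> V" "card (nbrs E x) \<ge> 3"
    and euler: "int (card V) - int (card E) + int (card (faces E \<rho>)) = 2"
    and O1: "O1 \<in> faces E \<rho>" "fst ` O1 = V"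
    and O2: "O2 \<in> faces E \<rho>" "fst ` O2 = V" and ne: "O1 \<noteq> O2"
  shows False
proof -
  let ?F = "faces E \<rho>"
  let ?R = "?F - {O1, O2}"
  have finF: "finite ?F" by (rule faces_fin)
  have c1: "card O1 \<ge> card V"
  proof -
    have "card (fst ` O1) \<le> card O1" by (rule card_image_le[OF face_fin[OF O1(1)]])
    then show ?thesis unfolding O1(2) .
  qed
  have c2: "card O2 \<ge> card V"
  proof -
    have "card (fst ` O2) \<le> card O2" by (rule card_image_le[OF face_fin[OF O2(1)]])
    then show ?thesis unfolding O2(2) .
  qed
  have x2: "card (nbrs E x) \<ge> 2" using x(2) by linarith
  have big: "3 \<le> card f" if fR: "f \<in> ?R" for f
  proof -
    have "f \<in> ?F" using fR by (rule DiffD1)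
    from face_big[OF conn x(1) x2 this] show ?thesis .
  qed
  have rest0: "of_nat (card ?R) * 3 \<le> sum card ?R"
    by (rule sum_bounded_below) (rule big)
  have rest: "3 * card ?R \<le> sum card ?R" using rest0 by simp
  have s1: "sum card ?F = card O1 + sum card (?F - {O1})" by (rule sum.remove[OF finF O1(1)])
  have O2in: "O2 \<in> ?F - {O1}" using O2(1) ne by simp
  have s2: "sum card (?F - {O1}) = card O2 + sum card (?F - {O1} - {O2})"
    by (rule sum.remove[OF _ O2in]) (simp add: finF)
  have s3: "?F - {O1} - {O2} = ?R" by blast
  have split: "sum card ?F = card O1 + card O2 + sum card ?R" using s1 s2 s3 by simp
  have sub2: "{O1,O2} \<subseteq> ?F" using O1(1) O2(1) by simp
  have cardrest: "card ?R = card ?F - card {O1,O2}" by (rule card_Diff_subset[OF _ sub2]) simp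
  have c12: "card {O1,O2} = 2" using ne by simp
  have F2: "card ?F \<ge> 2" using card_mono[OF finF sub2] c12 by simp
  have S: "sum card ?F = 2 * card E" using sum_faces card_darts by simp
  have cr: "card ?R = card ?F - 2" using cardrest c12 by simp
  have eqs1: "card O1 = card V" and eqs2: "card O2 = card V" and F: "card ?F = 2"
    using S split rest cr F2 c1 c2 euler by linarith+
  have R0: "card ?R = 0" using cr F by simp
  have finR: "finite ?R" using finF by simp
  have Re: "?R = {}" using R0 finR by simp
  have Feq: "?F = {O1,O2}" using Re sub2 by blast
  have DU: "darts E = O1 \<union> O2" using faces_union Feq by simp
  let ?A = "{x} \<times> nbrs E x"
  have Asub: "?A \<subseteq> darts E"
  proof
    fix z assume "z \<in> ?A"
    then obtain w where z: "z = (x,w)" "w \<in> nbrs E x" by blast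
    then show "z \<in> darts E" by (simp add: darts_def nbrs_def)
  qed
  have le1: "card (?A \<inter> Q) \<le> 1" if Qin: "Q \<in> ?F" and Qfst: "fst ` Q = V" and Qc: "card Q = card V" for Q
  proof -
    have finQ: "finite Q" by (rule face_fin[OF Qin])
    have "card (fst ` Q) = card Q" using Qfst Qc by simp
    then have inj: "inj_on fst Q" by (rule eq_card_imp_inj_on[OF finQ])
    have inj2: "inj_on fst (?A \<inter> Q)" by (rule inj_on_subset[OF inj]) blast
    have "card (?A \<inter> Q) = card (fst ` (?A \<inter> Q))" by (rule card_image[OF inj2, symmetric])
    also have "\<dots> \<le> card {x}" by (rule card_mono) auto
    finally show ?thesis by simp
  qed
  have Aeq: "?A = (?A \<inter> O1) \<union> (?A \<inter> O2)" using Asub DU by blast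
  have "card ?A \<le> card (?A \<inter> O1) + card (?A \<inter> O2)"
    by (subst Aeq) (rule card_Un_le)
  also have "\<dots> \<le> 2" using le1[OF O1 eqs1] le1[OF O2 eqs2] by simp
  finally have "card (nbrs E x) \<le> 2" by (simp add: card_cartesian_product_singleton)
  then show False using x(2) by simp
qed

end

lemma sg_ins:
  assumes "simple_graph V E" "p \<in> V" "q \<in> V" "p \<noteq> q"
  shows "simple_graph V (insert {p,q} E)"
  unfolding simple_graph_def
proof (intro conjI ballI)
  show "finite V" using assms(1) by (simp add: simple_graph_def)
  fix e assume "e \<in> insert {p,q} E"
  then consider "e = {p,q}" | "e \<in> E" by blast
  then show "\<exists>u v. e = {u, v} \<and> u \<noteq> v \<and> u \<in> V \<and> v \<in> V"
  proof cases
    case 1 then show ?thesis using assms(2-4) by (intro exI[of _ p] exI[of _ q]) simp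
  next
    case 2 then show ?thesis by (rule sg_edge[OF assms(1)])
  qed
qed

lemma nbrs_fin:
  assumes "simple_graph V E" shows "finite (nbrs E x)"
proof -
  have "nbrs E x \<subseteq> V"
  proof
    fix w assume "w \<in> nbrs E x"
    then have "{x,w} \<in> E" by (simp add: nbrs_def)
    from sg_edge[OF assms this] obtain u v where uv: "{x,w} = {u,v}" "u \<in> V" "v \<in> V" by blast
    then show "w \<in> V" by (auto simp: doubleton_eq_iff)
  qed
  moreover have "finite V" using assms by (simp add: simple_graph_def)
  ultimately show ?thesis by (rule finite_subset)
qed

lemma nbrs_ins_p: "nbrs (insert {p,q} E) p = insert q (nbrs E p)"
  by (auto simp: nbrs_def doubleton_eq_iff)

lemma nbrs_ins_q: "nbrs (insert {p,q} E) q = insert p (nbrs E q)"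
  by (auto simp: nbrs_def doubleton_eq_iff)

lemma ext_rho:
  assumes ce: "consistent_extension V E \<rho> p q a b \<rho>' O'"
    and pq: "p \<noteq> q" "{p, q} \<notin> E"
    and a: "a \<in> nbrs E p" and b: "b \<in> nbrs E q"
    and u: "u \<in> V" and v: "v \<in> nbrs (insert {p,q} E) u"
  shows "\<rho>' u v = (if u = p \<and> v = a then q else if u = p \<and> v = q then \<rho> p a
                   else if u = q \<and> v = b then p else if u = q \<and> v = p then \<rho> q b else \<rho> u v)"
proof -
  let ?E = "insert {p,q} E"
  have ce': "outerplanar_embedding V ?E \<rho>' O' \<and> \<rho>' p a = q \<and> \<rho>' q b = p \<and>
     (\<forall>u\<in>V. \<forall>v\<in>nbrs E u.
        \<rho> u v = (if (u = p \<and> \<rho>' u v = q) \<or> (u = q \<and> \<rho>' u v = p)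
                 then \<rho>' u (\<rho>' u v) else \<rho>' u v))"
    using ce unfolding consistent_extension_def .
  have oe: "outerplanar_embedding V ?E \<rho>' O'" using ce' by (rule conjunct1)
  have pa: "\<rho>' p a = q" using ce' by (elim conjE)
  have qb: "\<rho>' q b = p" using ce' by (elim conjE)
  have cons: "\<forall>u\<in>V. \<forall>v\<in>nbrs E u.
        \<rho> u v = (if (u = p \<and> \<rho>' u v = q) \<or> (u = q \<and> \<rho>' u v = p)
                 then \<rho>' u (\<rho>' u v) else \<rho>' u v)" using ce' by (elim conjE)
  have consI: "\<rho> u' v' = (if (u' = p \<and> \<rho>' u' v' = q) \<or> (u' = q \<and> \<rho>' u' v' = p)
                 then \<rho>' u' (\<rho>' u' v') else \<rho>' u' v')" if uV: "u' \<in> V" and vN: "v' \<in> nbrs E u'" for u' v'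
    using bspec[OF bspec[OF cons uV] vN] .
  have rs: "rotation_system V ?E \<rho>'"
    using oe by (simp add: outerplanar_embedding_def plane_embedding_def)
  have injp: "inj_on (\<rho>' w) (nbrs ?E w)" if wV: "w \<in> V" for w
    using rs_bij[OF rs wV] by (simp add: bij_betw_def)
  have aE: "a \<in> nbrs ?E p" and bE: "b \<in> nbrs ?E q" using a b by (simp_all add: nbrs_def)
  show ?thesis
  proof (cases "u = p \<and> v = a")
    case True then show ?thesis using pa by simp
  next
    case na: False
    show ?thesis
    proof (cases "u = p \<and> v = q")
      case True
      have up: "u = p" using True by (rule conjunct1)
      have pV: "p \<in> V" using u up by simp
      have "\<rho> p a = \<rho>' p (\<rho>' p a)" using consI[OF pV a] pa by simp
      then have "\<rho> p a = \<rho>' p q" using pa by simp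
      then show ?thesis using True na by simp
    next
      case nb: False
      show ?thesis
      proof (cases "u = q \<and> v = b")
        case True
        have "u \<noteq> p" using True pq(1) by simp
        then show ?thesis using True qb by simp
      next
        case nc: False
        show ?thesis
        proof (cases "u = q \<and> v = p")
          case True
          have up: "u = q" using True by (rule conjunct1)
          have qV: "q \<in> V" using u up by simp
          have "\<rho> q b = \<rho>' q (\<rho>' q b)" using consI[OF qV b] qb pq(1) by simp
          then have "\<rho> q b = \<rho>' q p" using qb by simp
          then show ?thesis using True na nb nc by simp
        next
          case nd: False
          have uvE: "{u,v} \<in> ?E" using v by (simp add: nbrs_def)
          have "{u,v} \<noteq> {p,q}"
          proof
            assume "{u,v} = {p,q}"
            then have "(u = p \<and> v = q) \<or> (u = q \<and> v = p)" by (simp add: doubleton_eq_iff)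
            then show False using nb nd by blast
          qed
          then have "{u,v} \<in> E" using uvE by simp
          then have vE: "v \<in> nbrs E u" by (simp add: nbrs_def)
          have c1: "\<not> (u = p \<and> \<rho>' u v = q)"
          proof
            assume h: "u = p \<and> \<rho>' u v = q"
            have up: "u = p" using h by (rule conjunct1)
            have uq: "\<rho>' u v = q" using h by (rule conjunct2)
            have "\<rho>' p v = \<rho>' p a" using up uq pa by simp
            moreover have "v \<in> nbrs ?E p" using v up by simp
            ultimately have "v = a" using inj_onD[OF injp[OF u[unfolded up]]] aE by blast
            then show False using up na by simp
          qed
          have c2: "\<not> (u = q \<and> \<rho>' u v = p)"
          proof
            assume h: "u = q \<and> \<rho>' u v = p"
            have up: "u = q" using h by (rule conjunct1)
            have uq: "\<rho>' u v = p" using h by (rule conjunct2)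
            have "\<rho>' q v = \<rho>' q b" using up uq qb by simp
            moreover have "v \<in> nbrs ?E q" using v up by simp
            ultimately have "v = b" using inj_onD[OF injp[OF u[unfolded up]]] bE by blast
            then show False using up nc by simp
          qed
          have "\<rho> u v = \<rho>' u v" using consI[OF u vE] c1 c2 by simp
          then show ?thesis by (simp only: if_not_P[OF na] if_not_P[OF nb] if_not_P[OF nc] if_not_P[OF nd])
        qed
      qed
    qed
  qed
qed

lemma faces_agree:
  assumes sg: "simple_graph V E" and rs1: "rotation_system V E \<rho>1" and rs2: "rotation_system V E \<rho>2"
    and ag: "\<forall>u\<in>V. \<forall>v\<in>nbrs E u. \<rho>1 u v = \<rho>2 u v"
  shows "faces E \<rho>1 = faces E \<rho>2"
proof -
  have st: "face_succ \<rho>1 d = face_succ \<rho>2 d" if "d \<in> darts E" for d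
  proof -
    obtain u v where uv: "d = (u,v)" by (cases d)
    have "v \<in> V" using darts_sub[OF sg] that uv by auto
    moreover have "u \<in> nbrs E v" using that uv by (auto simp: darts_def nbrs_def insert_commute)
    ultimately show ?thesis using ag uv by (simp add: face_succ_def)
  qed
  have it: "(face_succ \<rho>1 ^^ k) d = (face_succ \<rho>2 ^^ k) d" if "d \<in> darts E" for d k
  proof (induction k)
    case 0 then show ?case by simp
  next
    case (Suc k)
    have "(face_succ \<rho>1 ^^ k) d \<in> darts E" using funpow_in[OF succ_in[OF sg rs1] that] .
    then show ?case using Suc st by simp
  qed
  have "orb (face_succ \<rho>1) d = orb (face_succ \<rho>2) d" if "d \<in> darts E" for d
    using it[OF that] unfolding orb_def by simp
  then show ?thesis unfolding faces_orb by (rule image_cong[OF refl])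
qed

theorem lemma1:
  fixes V :: "'v set" and E :: "'v set set" and \<rho> :: "'v \<Rightarrow> 'v \<Rightarrow> 'v"
    and Oc :: "('v \<times> 'v) set" and p q a b :: 'v
  assumes "simple_graph V E"
    and "connected_graph V E"
    and "outerplanar_embedding V E \<rho> Oc"
    and "p \<in> V" and "q \<in> V" and "p \<noteq> q" and "{p, q} \<notin> E"
    and "outerplanar V (insert {p, q} E)"
    and "a \<in> nbrs E p" and "b \<in> nbrs E q"
    and "degree E p > 1 \<or> degree E q > 1"
  shows "\<forall>\<rho>1 O1 \<rho>2 O2.
           consistent_extension V E \<rho> p q a b \<rho>1 O1 \<and>
           consistent_extension V E \<rho> p q a b \<rho>2 O2 \<longrightarrow>
           (\<forall>u\<in>V. \<forall>v\<in>nbrs (insert {p, q} E) u. \<rho>1 u v = \<rho>2 u v) \<and> O1 = O2"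
proof (intro allI impI)
  fix \<rho>1 O1 \<rho>2 O2
  assume h: "consistent_extension V E \<rho> p q a b \<rho>1 O1 \<and> consistent_extension V E \<rho> p q a b \<rho>2 O2"
  have h1: "consistent_extension V E \<rho> p q a b \<rho>1 O1" using h by (rule conjunct1)
  have h2: "consistent_extension V E \<rho> p q a b \<rho>2 O2" using h by (rule conjunct2)
  let ?E = "insert {p,q} E"
  have ag: "\<forall>u\<in>V. \<forall>v\<in>nbrs ?E u. \<rho>1 u v = \<rho>2 u v"
  proof (intro ballI)
    fix u v assume uV: "u \<in> V" and vN: "v \<in> nbrs ?E u"
    note r1 = ext_rho[OF h1 assms(6,7,9,10) uV vN]
    note r2 = ext_rho[OF h2 assms(6,7,9,10) uV vN]
    show "\<rho>1 u v = \<rho>2 u v" unfolding r1 r2 ..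
  qed
  have sg: "simple_graph V ?E" by (rule sg_ins[OF assms(1,4,5,6)])
  have e1: "outerplanar_embedding V ?E \<rho>1 O1" using h1 unfolding consistent_extension_def by (rule conjunct1)
  have e2: "outerplanar_embedding V ?E \<rho>2 O2" using h2 unfolding consistent_extension_def by (rule conjunct1)
  have pe1: "plane_embedding V ?E \<rho>1 O1" and O1f: "fst ` O1 = V"
    using e1 unfolding outerplanar_embedding_def by simp_all
  have pe2: "plane_embedding V ?E \<rho>2 O2" and O2f: "fst ` O2 = V"
    using e2 unfolding outerplanar_embedding_def by simp_all
  have rs1: "rotation_system V ?E \<rho>1"
    and eu: "int (card V) - int (card ?E) + int (card (faces ?E \<rho>1)) = 2"
    and O1: "O1 \<in> faces ?E \<rho>1"
    using pe1 unfolding plane_embedding_def by simp_all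
  have rs2: "rotation_system V ?E \<rho>2" and O2': "O2 \<in> faces ?E \<rho>2"
    using pe2 unfolding plane_embedding_def by simp_all
  have O2: "O2 \<in> faces ?E \<rho>1" using O2' faces_agree[OF sg rs1 rs2 ag] by simp
  have conn: "connected_graph V ?E"
  proof -
    have sub: "{(x, y). {x, y} \<in> E} \<subseteq> {(x, y). {x, y} \<in> ?E}" by auto
    show ?thesis unfolding connected_graph_def
    proof (intro ballI)
      fix u v assume "u \<in> V" "v \<in> V"
      then have "(u, v) \<in> {(x, y). {x, y} \<in> E}\<^sup>*" using assms(2) unfolding connected_graph_def by simp
      then show "(u, v) \<in> {(x, y). {x, y} \<in> ?E}\<^sup>*" using rtrancl_mono[OF sub] by (rule subsetD[rotated])
    qed
  qed
  have fp: "finite (nbrs E p)" and fq: "finite (nbrs E q)" using nbrs_fin[OF assms(1)] by simp_all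
  obtain x where x: "x \<in> V" "card (nbrs ?E x) \<ge> 3"
  proof (cases "degree E p > 1")
    case True
    have "q \<notin> nbrs E p" using assms(7) by (simp add: nbrs_def)
    then have "card (insert q (nbrs E p)) = Suc (card (nbrs E p))" using fp by simp
    then have "card (nbrs ?E p) = Suc (card (nbrs E p))" by (simp only: nbrs_ins_p)
    moreover have "card (nbrs E p) > 1" using True by (simp add: degree_def)
    ultimately have "card (nbrs ?E p) \<ge> 3" by simp
    then show ?thesis using that assms(4) by blast
  next
    case False
    then have d: "degree E q > 1" using assms(11) by simp
    have "p \<notin> nbrs E q" using assms(7) by (simp add: nbrs_def insert_commute)
    then have "card (insert p (nbrs E q)) = Suc (card (nbrs E q))" using fq by simp
    then have "card (nbrs ?E q) = Suc (card (nbrs E q))" by (simp only: nbrs_ins_q)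
    moreover have "card (nbrs E q) > 1" using d by (simp add: degree_def)
    ultimately have "card (nbrs ?E q) \<ge> 3" by simp
    then show ?thesis using that assms(5) by blast
  qed
  have "O1 = O2"
  proof (rule ccontr)
    assume ne: "O1 \<noteq> O2"
    show False by (rule main_count[OF sg rs1 conn x eu O1 O1f O2 O2f ne])
  qed
  with ag show "(\<forall>u\<in>V. \<forall>v\<in>nbrs ?E u. \<rho>1 u v = \<rho>2 u v) \<and> O1 = O2" by (rule conjI)
qed

end
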